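(* Let $h\ge 2$ be an integer and let $O$ be a finite set of next hops with $\delta=|O|$ and probability distribution $(p_o)_{o\in O}$, with entropy $H_O=\sum_{o\in O} p_o\log_2\frac{1}{p_o}$. Let $T$ be the complete binary trie of height $h$ whose $2^h$ leaves are labeled independently with next hop $o$ with probability $p_o$, let $D$ be the DAG obtained from $T$ by trie-folding, and let $V^j_D$ be the set of nodes of $D$ at level $j$. For $1\le j\le h$ put $\beta_j=\min\{\frac{H_O}{h-j}2^h+3,\,2^{h-j},\,\delta^{2^j}\}$ (with the first term $+\infty$ for $j=h$), let $k^*\in\{1,\dots,h\}$ be a level at which $\beta_j$ attains its maximum, and suppose each node of $D$ is stored using $2(h-k^* )$ bits. Then the expected number of bits needed to store the nodes of $D$ (at levels $1,\dots,h$), namely $2(h-k^* )\sum_{j=1}^h E(|V^j_D|)$, is at most \[2 h H_O 2^{h} + 6h^2.\]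
   Context: Levels: the level of a node of $T$ is $h$ minus its distance from the root; the root has level $h$, leaves level $0$, and level $j$ has $2^{h-j}$ nodes, each the root of a subtrie of height $j$ with $2^j$ labeled leaves. Trie-folding merges nodes whose rooted subtries are identical (same structure and same leaf next-hop labels), producing a DAG $D$; the nodes of $D$ at level $j$ correspond to the distinct leaf-label strings of length $2^j$ among the $2^{h-j}$ level-$j$ subtries. Each node of $D$ stores two child pointers of $h-k^*$ bits each. *)

theory Defs
  imports Complex_Main "HOL-Library.FuncSet"
begin

text \<open>A leaf labeling of the complete binary trie of height h: leaves are numbered
 0 .. 2^h - 1 from left to right; each gets a next hop.\<close>

definition labelings :: "nat \<Rightarrow> 'a set \<Rightarrow> (nat \<Rightarrow> 'a) set" where
  "labelings h Hops = PiE {..<2^h} (\<lambda>_. Hops)"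

definition lab_prob :: "nat \<Rightarrow> ('a \<Rightarrow> real) \<Rightarrow> (nat \<Rightarrow> 'a) \<Rightarrow> real" where
  "lab_prob h p f = (\<Prod>i<2^h. p (f i))"

text \<open>Nodes of the folded DAG D at level j: the distinct leaf-label strings of the
 2^(h-j) level-j subtries (the m-th one covers leaves m*2^j .. m*2^j + 2^j - 1).\<close>
definition dag_level_nodes :: "nat \<Rightarrow> (nat \<Rightarrow> 'a) \<Rightarrow> nat \<Rightarrow> 'a list set" where
  "dag_level_nodes h f j =
     (\<lambda>m. map (\<lambda>i. f (m * 2^j + i)) [0..<2^j]) ` {..<2^(h-j)}"

definition expected_level_nodes :: "nat \<Rightarrow> 'a set \<Rightarrow> ('a \<Rightarrow> real) \<Rightarrow> nat \<Rightarrow> real" where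
  "expected_level_nodes h Hops p j =
     (\<Sum>f\<in>labelings h Hops. lab_prob h p f * real (card (dag_level_nodes h f j)))"

definition entropy_O :: "'a set \<Rightarrow> ('a \<Rightarrow> real) \<Rightarrow> real" where
  "entropy_O Hops p = (\<Sum>x\<in>Hops. p x * log 2 (1 / p x))"

definition beta :: "nat \<Rightarrow> 'a set \<Rightarrow> ('a \<Rightarrow> real) \<Rightarrow> nat \<Rightarrow> real" where
  "beta h Hops p j =
     (if j = h then min (2 ^ (h - j)) (real (card Hops) ^ (2 ^ j))
      else min (entropy_O Hops p / real (h - j) * 2 ^ h + 3)
               (min (2 ^ (h - j)) (real (card Hops) ^ (2 ^ j))))"

end

theory Submission
  imports Defs
begin

lemma idx_bound:
  fixes m i j h :: nat
  assumes "j \<le> h" "m < 2^(h-j)" "i < 2^j"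
  shows "m * 2^j + i < 2^h"
proof -
  have "m * 2^j + i < (m+1) * 2^j" using assms by simp
  also have "\<dots> \<le> 2^(h-j) * 2^j" using assms by (intro mult_right_mono) auto
  also have "\<dots> = 2^h" using assms by (simp add: power_add[symmetric])
  finally show ?thesis .
qed

definition bF :: "nat \<Rightarrow> (nat \<Rightarrow> 'a) \<Rightarrow> nat \<Rightarrow> nat \<Rightarrow> 'a" where
  "bF j f m = restrict (\<lambda>i. f (m * 2^j + i)) {..<2^j}"

lemma bF_in:
  assumes "j \<le> h" "f \<in> labelings h Hops" "m < 2^(h-j)"
  shows "bF j f m \<in> PiE {..<2^j} (\<lambda>_. Hops)"
  using assms idx_bound[OF assms(1,3)]
  by (auto simp: bF_def labelings_def PiE_iff)

lemma card_dag:
  assumes "j \<le> h" "f \<in> labelings h Hops"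
  shows "card (dag_level_nodes h f j) = card (bF j f ` {..<2^(h-j)})"
proof -
  let ?S = "PiE {..<(2::nat)^j} (\<lambda>_. Hops)"
  have eq: "dag_level_nodes h f j = (\<lambda>s. map s [0..<2^j]) ` (bF j f ` {..<2^(h-j)})"
    unfolding dag_level_nodes_def image_image bF_def
    by (intro image_cong refl map_cong) auto
  have inj: "inj_on (\<lambda>s. map s [0..<2^j]) ?S"
  proof
    fix s t assume s: "s \<in> ?S" and t: "t \<in> ?S" and e: "map s [0..<2^j] = map t [0..<2^j]"
    show "s = t"
    proof
      fix i show "s i = t i"
      proof (cases "i < 2^j")
        case True
        have "map s [0..<2^j] ! i = map t [0..<2^j] ! i" using e by (rule arg_cong)
        moreover have "i < length [0..<2^j]" using True by simp
        ultimately show ?thesis using True by (metis nth_map nth_upt add_0)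
      next
        case False
        then have "i \<notin> {..<2^j}" by simp
        then show ?thesis using PiE_arb[OF s] PiE_arb[OF t] by metis
      qed
    qed
  qed
  have sub: "bF j f ` {..<2^(h-j)} \<subseteq> ?S" using bF_in[OF assms] by auto
  show ?thesis unfolding eq by (rule card_image[OF inj_on_subset[OF inj sub]])
qed

lemma marg:
  fixes p :: "'a \<Rightarrow> real"
  assumes "finite I" "finite A"
  shows "(\<Sum>f\<in>PiE I (\<lambda>_. A). \<Prod>i\<in>I. p (f i) * c i (f i)) = (\<Prod>i\<in>I. \<Sum>x\<in>A. p x * c i x)"
  using assms by (intro prod_sum_PiE[symmetric]) auto

lemma total_prob:
  fixes p :: "'a \<Rightarrow> real"
  assumes "finite Hops" "(\<Sum>x\<in>Hops. p x) = 1"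
  shows "(\<Sum>f\<in>labelings h Hops. lab_prob h p f) = 1"
  using marg[OF _ assms(1), of "{..<(2::nat)^h}" p "\<lambda>_ _. 1"] assms(2)
  by (simp add: labelings_def lab_prob_def)

lemma bF_eq_iff:
  assumes "s \<in> PiE {..<2^j} (\<lambda>_. Hops)"
  shows "bF j f m = s \<longleftrightarrow> (\<forall>k<2^j. f (m * 2^j + k) = s k)"
proof
  assume "bF j f m = s" then show "\<forall>k<2^j. f (m * 2^j + k) = s k"
    by (auto simp: bF_def)
next
  assume H: "\<forall>k<2^j. f (m * 2^j + k) = s k"
  show "bF j f m = s"
  proof
    fix k show "bF j f m k = s k"
    proof (cases "k < 2^j")
      case True then show ?thesis using H by (simp add: bF_def)
    next
      case False
      then have "k \<notin> {..<2^j}" by simp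
      then show ?thesis using PiE_arb[OF assms] by (simp add: bF_def)
    qed
  qed
qed

lemma block_prob:
  fixes p :: "'a \<Rightarrow> real"
  assumes "finite Hops" "(\<Sum>x\<in>Hops. p x) = 1" "j \<le> h" "m < 2^(h-j)"
    and s: "s \<in> PiE {..<2^j} (\<lambda>_. Hops)"
  shows "(\<Sum>f\<in>labelings h Hops. lab_prob h p f * (if bF j f m = s then 1 else 0)) = (\<Prod>k<2^j. p (s k))"
proof -
  define a where "a = m * 2^j"
  define J where "J = (\<lambda>k. a + k) ` {..<(2::nat)^j}"
  define c where "c = (\<lambda>i x. if i \<in> J then (if x = s (i - a) then 1 else 0) else (1::real))"
  have JI: "J \<subseteq> {..<2^h}" using idx_bound[OF assms(3,4)] by (auto simp: J_def a_def)
  have "(\<Sum>f\<in>labelings h Hops. lab_prob h p f * (if bF j f m = s then 1 else 0))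
      = (\<Sum>f\<in>labelings h Hops. \<Prod>i\<in>{..<2^h}. p (f i) * c i (f i))"
  proof (rule sum.cong[OF refl])
    fix f
    have ci: "(\<Prod>i\<in>{..<2^h}. c i (f i)) = (if bF j f m = s then 1 else 0)"
    proof (cases "bF j f m = s")
      case True
      then have "\<forall>k<2^j. f (a + k) = s k" using bF_eq_iff[OF s] by (simp add: a_def)
      then have "\<forall>i. c i (f i) = 1" by (auto simp: c_def J_def)
      then show ?thesis using True by simp
    next
      case False
      then obtain k where k: "k < 2^j" "f (a + k) \<noteq> s k" using bF_eq_iff[OF s] by (auto simp: a_def)
      have "a + k \<in> {..<2^h}" using JI k by (auto simp: J_def)
      moreover have "c (a+k) (f (a+k)) = 0" using k by (auto simp: c_def J_def)
      ultimately have "(\<Prod>i\<in>{..<2^h}. c i (f i)) = 0" by (metis finite_lessThan prod_zero)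
      then show ?thesis using False by simp
    qed
    show "lab_prob h p f * (if bF j f m = s then 1 else 0) = (\<Prod>i\<in>{..<2^h}. p (f i) * c i (f i))"
      by (simp add: prod.distrib ci lab_prob_def)
  qed
  also have "\<dots> = (\<Prod>i\<in>{..<2^h}. \<Sum>x\<in>Hops. p x * c i x)"
    unfolding labelings_def using assms(1) by (rule marg[OF finite_lessThan])
  also have "\<dots> = (\<Prod>i\<in>{..<2^h}. if i \<in> J then p (s (i - a)) else 1)"
  proof (rule prod.cong[OF refl])
    fix i assume "i \<in> {..<(2::nat)^h}"
    show "(\<Sum>x\<in>Hops. p x * c i x) = (if i \<in> J then p (s (i - a)) else 1)"
    proof (cases "i \<in> J")
      case True
      then have "s (i - a) \<in> Hops" using s by (auto simp: J_def PiE_iff)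
      then show ?thesis using True assms(1)
        by (simp add: c_def if_distrib[of "\<lambda>y. p _ * y"] sum.delta' cong: if_cong)
    next
      case False then show ?thesis using assms(2) by (simp add: c_def)
    qed
  qed
  also have "\<dots> = (\<Prod>i\<in>J. p (s (i - a)))"
    using JI by (simp add: prod.If_cases Int_absorb1 inf.absorb2)
  also have "\<dots> = (\<Prod>k<2^j. p (s k))"
    unfolding J_def by (subst prod.reindex) (auto simp: inj_on_def)
  finally show ?thesis .
qed

lemma str_marg:
  fixes p :: "'a \<Rightarrow> real" and L :: nat
  assumes "finite Hops" "(\<Sum>x\<in>Hops. p x) = 1" "k < L"
  shows "(\<Sum>s\<in>PiE {..<L} (\<lambda>_. Hops). (\<Prod>i<L. p (s i)) * g (s k)) = (\<Sum>x\<in>Hops. p x * g x)"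
proof -
  define c where "c = (\<lambda>i x. if i = k then g x else (1::real))"
  have "(\<Sum>s\<in>PiE {..<L} (\<lambda>_. Hops). (\<Prod>i<L. p (s i)) * g (s k))
      = (\<Sum>s\<in>PiE {..<L} (\<lambda>_. Hops). \<Prod>i<L. p (s i) * c i (s i))"
  proof (intro sum.cong refl)
    fix s
    have "(\<Prod>i<L. c i (s i)) = g (s k)"
      unfolding c_def using assms(3) by (subst prod.delta) auto
    then show "(\<Prod>i<L. p (s i)) * g (s k) = (\<Prod>i<L. p (s i) * c i (s i))"
      by (simp add: prod.distrib)
  qed
  also have "\<dots> = (\<Prod>i<L. \<Sum>x\<in>Hops. p x * c i x)"
    using assms(1) by (rule marg[OF finite_lessThan])
  also have "\<dots> = (\<Prod>i<L. if i = k then (\<Sum>x\<in>Hops. p x * g x) else 1)"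
    using assms(2) by (intro prod.cong refl) (simp add: c_def)
  also have "\<dots> = (\<Sum>x\<in>Hops. p x * g x)" using assms(3) by (simp add: prod.delta)
  finally show ?thesis .
qed

lemma str_total:
  fixes p :: "'a \<Rightarrow> real" and L :: nat
  assumes "finite Hops" "(\<Sum>x\<in>Hops. p x) = 1"
  shows "(\<Sum>s\<in>PiE {..<L} (\<lambda>_. Hops). (\<Prod>i<L. p (s i))) = 1"
  using marg[of "{..<L}" Hops p "\<lambda>_ _. 1"] assms by simp

lemma log_inv: "x > 0 \<Longrightarrow> log 2 (1 / x) = - log 2 x"
  by (simp add: log_divide)

lemma str_entropy:
  fixes p :: "'a \<Rightarrow> real" and L :: nat
  assumes "finite Hops" "(\<Sum>x\<in>Hops. p x) = 1" "\<And>x. x \<in> Hops \<Longrightarrow> p x > 0"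
  shows "(\<Sum>s\<in>PiE {..<L} (\<lambda>_. Hops). (\<Prod>i<L. p (s i)) * log 2 (1 / (\<Prod>i<L. p (s i))))
     = real L * entropy_O Hops p"
proof -
  have "(\<Sum>s\<in>PiE {..<L} (\<lambda>_. Hops). (\<Prod>i<L. p (s i)) * log 2 (1 / (\<Prod>i<L. p (s i))))
     = (\<Sum>s\<in>PiE {..<L} (\<lambda>_. Hops). \<Sum>k<L. (\<Prod>i<L. p (s i)) * log 2 (1 / p (s k)))"
  proof (intro sum.cong refl)
    fix s assume s: "s \<in> PiE {..<L} (\<lambda>_. Hops)"
    then have pos: "\<And>i. i < L \<Longrightarrow> p (s i) > 0" using assms(3) by (auto simp: PiE_iff)
    then have "(\<Prod>i<L. p (s i)) > 0" by (intro prod_pos) auto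
    then have "log 2 (1 / (\<Prod>i<L. p (s i))) = - log 2 (\<Prod>i<L. p (s i))"
      by (rule log_inv)
    also have "\<dots> = - (ln (\<Prod>i<L. p (s i)) / ln 2)" by (simp add: log_def)
    also have "\<dots> = (\<Sum>k<L. log 2 (1 / p (s k)))"
    proof -
      have e: "ln (\<Prod>i<L. p (s i)) = (\<Sum>k<L. ln (p (s k)))"
        by (rule ln_prod) (use pos in force)+
      have "\<And>k. k < L \<Longrightarrow> log 2 (1 / p (s k)) = - (ln (p (s k)) / ln 2)"
        using pos by (simp add: log_def ln_div)
      then have "(\<Sum>k<L. log 2 (1 / p (s k))) = (\<Sum>k<L. - (ln (p (s k)) / ln 2))"
        by (intro sum.cong) auto
      then show ?thesis by (simp add: e sum_divide_distrib sum_negf)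
    qed
    finally show "(\<Prod>i<L. p (s i)) * log 2 (1 / (\<Prod>i<L. p (s i))) =
       (\<Sum>k<L. (\<Prod>i<L. p (s i)) * log 2 (1 / p (s k)))"
      by (simp add: sum_distrib_left)
  qed
  also have "\<dots> = (\<Sum>k<L. \<Sum>s\<in>PiE {..<L} (\<lambda>_. Hops). (\<Prod>i<L. p (s i)) * log 2 (1 / p (s k)))"
    by (rule sum.swap)
  also have "\<dots> = (\<Sum>k<L. entropy_O Hops p)"
    using str_marg[OF assms(1,2), of _ L "\<lambda>x. log 2 (1 / p x)"]
    by (intro sum.cong refl) (simp add: entropy_O_def)
  also have "\<dots> = real L * entropy_O Hops p" by simp
  finally show ?thesis .
qed

lemma ln3: "ln (3::real) \<ge> 1"
proof -
  have "ln (exp 1) \<le> ln (3::real)" using exp_le by (subst ln_le_cancel_iff) auto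
  then show ?thesis by simp
qed

lemma analytic:
  fixes P q :: real and l :: nat
  assumes P1: "P \<le> 1" and Pq: "P \<le> 2^l * q" and q0: "0 < q" and q1: "q \<le> 1" and l1: "l \<ge> 1"
  shows "P \<le> 2^l * q * log 2 (1/q) / l + 3*q"
proof -
  have lpos: "real l > 0" using l1 by simp
  have lg0: "log 2 (1/q) \<ge> 0" using q0 q1 by simp
  show ?thesis
  proof (cases "q \<ge> 1/3")
    case True
    have "0 \<le> 2^l * q * log 2 (1/q) / l" using lg0 q0 lpos by simp
    then show ?thesis using True P1 by linarith
  next
    case q3: False
    show ?thesis
    proof (cases "q * 2^l \<le> 1")
      case True
      then have "2^l \<le> 1/q" using q0 by (simp add: le_divide_eq mult.commute)
      then have "log 2 ((2::real)^l) \<le> log 2 (1/q)" using q0 by (subst log_le_cancel_iff) auto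
      then have ll: "real l \<le> log 2 (1/q)" by simp
      have "2^l * q * real l \<le> 2^l * q * log 2 (1/q)" using ll q0 by (intro mult_left_mono) auto
      then have "2^l * q \<le> 2^l * q * log 2 (1/q) / l" using lpos by (simp add: le_divide_eq)
      then show ?thesis using Pq q0 by linarith
    next
      case False
      define x where "x = 2^l * q"
      have x1: "x > 1" using False by (simp add: x_def mult.commute)
      have x3: "3 * x < 2^l" using q3 by (simp add: x_def)
      have lq: "log 2 (1/q) = l - log 2 x"
      proof -
        have "1/q = 2^l / x" using q0 by (simp add: x_def)
        then show ?thesis using x1 by (simp add: log_divide)
      qed
      have "log 2 (3 * x) \<le> log 2 ((2::real)^l)" using x3 x1 by (subst log_le_cancel_iff) auto
      then have l3: "log 2 3 + log 2 x \<le> l" using x1 by (simp only: log_pow_cancel log_mult) auto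
      have "ln x \<le> x - 1" using x1 by (intro ln_le_minus_one) simp
      also have "\<dots> \<le> (x - 1) * ln 3" using mult_left_mono[OF ln3, of "x-1"] x1 by simp
      finally have "ln x / ln 2 \<le> (x - 1) * ln 3 / ln 2" by (rule divide_right_mono) simp
      then have "ln x / ln 2 \<le> (x - 1) * (ln 3 / ln 2)" by simp
      then have yx: "log 2 x \<le> (x - 1) * log 2 3" by (simp add: log_def)
      have "(x - 1) * (log 2 3 + log 2 x) \<le> (x - 1) * l" using l3 x1 by (intro mult_left_mono) auto
      then have "l \<le> x * (l - log 2 x)" using yx by (simp add: algebra_simps)
      then have "real l \<le> x * log 2 (1/q)" using lq by simp
      then have "1 \<le> x * log 2 (1/q) / l" using lpos by (simp add: le_divide_eq)
      then have "1 \<le> 2^l * q * log 2 (1/q) / l" by (simp add: x_def)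
      moreover have "0 \<le> 3 * q" using q0 by simp
      ultimately show ?thesis using P1 by linarith
    qed
  qed
qed

lemma p_le1:
  fixes p :: "'a \<Rightarrow> real"
  assumes "finite Hops" "\<And>x. x \<in> Hops \<Longrightarrow> p x > 0" "(\<Sum>x\<in>Hops. p x) = 1" "x \<in> Hops"
  shows "p x \<le> 1"
proof -
  have "p x \<le> (\<Sum>x\<in>Hops. p x)"
    using assms by (intro member_le_sum) (auto intro: less_imp_le)
  then show ?thesis using assms(3) by simp
qed

lemma lab_prob_nonneg:
  fixes p :: "'a \<Rightarrow> real"
  assumes "\<And>x. x \<in> Hops \<Longrightarrow> p x > 0" "f \<in> labelings h Hops"
  shows "lab_prob h p f \<ge> 0"
  unfolding lab_prob_def
proof (rule prod_nonneg)
  fix i assume "i \<in> {..<(2::nat)^h}"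
  then have "f i \<in> Hops" using assms(2) by (auto simp: labelings_def PiE_iff)
  then show "p (f i) \<ge> 0" using assms(1) by (simp add: less_imp_le)
qed

lemma E_as_sum:
  fixes p :: "'a \<Rightarrow> real"
  assumes "j \<le> h" and fin: "finite Hops"
  shows "expected_level_nodes h Hops p j =
    (\<Sum>s\<in>PiE {..<(2::nat)^j} (\<lambda>_. Hops). \<Sum>f\<in>labelings h Hops.
        lab_prob h p f * (if s \<in> bF j f ` {..<2^(h-j)} then 1 else 0))"
proof -
  let ?S = "PiE {..<(2::nat)^j} (\<lambda>_. Hops)"
  have "expected_level_nodes h Hops p j =
     (\<Sum>f\<in>labelings h Hops. lab_prob h p f *
        (\<Sum>s\<in>?S. (if s \<in> bF j f ` {..<2^(h-j)} then 1 else 0)))"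
    unfolding expected_level_nodes_def
  proof (intro sum.cong refl)
    fix f assume f: "f \<in> labelings h Hops"
    have sub: "bF j f ` {..<2^(h-j)} \<subseteq> ?S" using bF_in[OF assms(1) f] by auto
    have "(\<Sum>s\<in>?S. (if s \<in> bF j f ` {..<2^(h-j)} then 1 else 0::real))
        = (\<Sum>s\<in>?S \<inter> bF j f ` {..<2^(h-j)}. 1)"
      using fin by (intro sum.inter_restrict[symmetric] finite_PiE) auto
    also have "\<dots> = real (card (bF j f ` {..<2^(h-j)}))"
      using sub by (simp add: Int_absorb1)
    finally show "lab_prob h p f * real (card (dag_level_nodes h f j)) =
        lab_prob h p f * (\<Sum>s\<in>?S. (if s \<in> bF j f ` {..<2^(h-j)} then 1 else 0))"
      using card_dag[OF assms(1) f] by simp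
  qed
  also have "\<dots> = (\<Sum>f\<in>labelings h Hops. \<Sum>s\<in>?S.
        lab_prob h p f * (if s \<in> bF j f ` {..<2^(h-j)} then 1 else 0))"
    by (simp add: sum_distrib_left)
  also have "\<dots> = (\<Sum>s\<in>?S. \<Sum>f\<in>labelings h Hops.
        lab_prob h p f * (if s \<in> bF j f ` {..<2^(h-j)} then 1 else 0))"
    by (rule sum.swap)
  finally show ?thesis .
qed

lemma levelC:
  fixes p :: "'a \<Rightarrow> real"
  assumes fin: "finite Hops" and pos: "\<And>x. x \<in> Hops \<Longrightarrow> p x > 0"
    and sum1: "(\<Sum>x\<in>Hops. p x) = 1" and j1: "1 \<le> j" and jh: "j < h"
  shows "expected_level_nodes h Hops p j \<le> entropy_O Hops p / real (h - j) * 2 ^ h + 3"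
proof -
  define S where "S = PiE {..<(2::nat)^j} (\<lambda>_. Hops)"
  define N where "N = (2::nat)^(h-j)"
  define l where "l = h - j"
  define q where "q s = (\<Prod>i<(2::nat)^j. p (s i))" for s
  define LAB where "LAB = labelings h Hops"
  define P where "P s = (\<Sum>f\<in>LAB. lab_prob h p f * (if s \<in> bF j f ` {..<N} then 1 else 0))" for s
  have jh': "j \<le> h" using jh by simp
  have l1: "l \<ge> 1" using jh by (simp add: l_def)
  have finS: "finite S" using fin by (simp add: S_def finite_PiE)
  have finLAB: "finite LAB" using fin by (simp add: LAB_def labelings_def finite_PiE)
  have lp0: "\<And>f. f \<in> LAB \<Longrightarrow> lab_prob h p f \<ge> 0"
    using lab_prob_nonneg[OF pos] by (auto simp: LAB_def)
  have tot: "(\<Sum>f\<in>LAB. lab_prob h p f) = 1" using total_prob[OF fin sum1] by (simp add: LAB_def)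
  have E: "expected_level_nodes h Hops p j = (\<Sum>s\<in>S. P s)"
    using E_as_sum[OF jh' fin, of p] by (simp add: S_def P_def LAB_def N_def)
  have bound: "P s \<le> 2^l * q s * log 2 (1 / q s) / l + 3 * q s" if s: "s \<in> S" for s
  proof (rule analytic[OF _ _ _ _ l1])
    show "P s \<le> 1"
    proof -
      have "P s \<le> (\<Sum>f\<in>LAB. lab_prob h p f)"
        unfolding P_def using lp0 by (intro sum_mono) (auto simp: mult_le_cancel_left1)
      then show ?thesis using tot by simp
    qed
    show "P s \<le> 2^l * q s"
    proof -
      have "P s \<le> (\<Sum>f\<in>LAB. lab_prob h p f * (\<Sum>m<N. if bF j f m = s then 1 else 0))"
        unfolding P_def
      proof (intro sum_mono mult_left_mono)
        fix f assume f: "f \<in> LAB"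
        show "lab_prob h p f \<ge> 0" using lp0 f .
        show "(if s \<in> bF j f ` {..<N} then 1 else 0) \<le> (\<Sum>m<N. if bF j f m = s then 1 else (0::real))"
        proof (cases "s \<in> bF j f ` {..<N}")
          case True
          then obtain m where m: "m < N" "bF j f m = s" by auto
          have "(1::real) = (if bF j f m = s then 1 else 0)" using m by simp
          also have "\<dots> \<le> (\<Sum>m<N. if bF j f m = s then 1 else (0::real))"
            using m by (intro member_le_sum) auto
          finally show ?thesis using True by simp
        qed (auto intro: sum_nonneg)
      qed
      also have "\<dots> = (\<Sum>m<N. \<Sum>f\<in>LAB. lab_prob h p f * (if bF j f m = s then 1 else 0))"
        by (simp add: sum_distrib_left sum.swap[of _ LAB])
      also have "\<dots> = (\<Sum>m<N. q s)"
        using block_prob[OF fin sum1 jh' _ s[unfolded S_def]]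
        by (intro sum.cong refl) (simp add: LAB_def q_def N_def)
      also have "\<dots> = 2^l * q s" by (simp add: N_def l_def)
      finally show ?thesis .
    qed
    have sH: "\<And>i. i < 2^j \<Longrightarrow> s i \<in> Hops" using s by (auto simp: S_def PiE_iff)
    show "0 < q s" unfolding q_def using sH pos by (intro prod_pos) auto
    show "q s \<le> 1" unfolding q_def
      using sH pos p_le1[OF fin pos sum1] by (intro prod_le_1) (auto intro: less_imp_le)
  qed
  have "expected_level_nodes h Hops p j \<le> (\<Sum>s\<in>S. 2^l * q s * log 2 (1 / q s) / l + 3 * q s)"
    unfolding E using bound by (intro sum_mono) auto
  also have "\<dots> = 2^l / l * (\<Sum>s\<in>S. q s * log 2 (1 / q s)) + 3 * (\<Sum>s\<in>S. q s)"
    by (simp add: sum.distrib sum_distrib_left sum_divide_distrib mult.assoc)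
  also have "(\<Sum>s\<in>S. q s * log 2 (1 / q s)) = real (2^j) * entropy_O Hops p"
    using str_entropy[OF fin sum1 pos, of "2^j"] by (simp add: S_def q_def)
  also have "(\<Sum>s\<in>S. q s) = 1"
    using str_total[OF fin sum1, of "2^j"] by (simp add: S_def q_def)
  also have "(2::real)^l / l * (real (2^j) * entropy_O Hops p) = entropy_O Hops p / real (h - j) * 2 ^ h"
  proof -
    have "(2::real)^l * 2^j = 2^h" using jh by (simp add: l_def power_add[symmetric])
    then show ?thesis by (simp add: l_def field_simps)
  qed
  finally show ?thesis by simp
qed

lemma levelAB:
  fixes p :: "'a \<Rightarrow> real"
  assumes fin: "finite Hops" and pos: "\<And>x. x \<in> Hops \<Longrightarrow> p x > 0"
    and sum1: "(\<Sum>x\<in>Hops. p x) = 1" and jh: "j \<le> h"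
  shows "expected_level_nodes h Hops p j \<le> 2^(h-j)"
    and "expected_level_nodes h Hops p j \<le> real (card Hops) ^ (2^j)"
proof -
  have lp0: "\<And>f. f \<in> labelings h Hops \<Longrightarrow> lab_prob h p f \<ge> 0"
    using lab_prob_nonneg[of Hops p, OF pos] by auto
  have tot: "(\<Sum>f\<in>labelings h Hops. lab_prob h p f) = 1" using total_prob[OF fin sum1] .
  have "expected_level_nodes h Hops p j \<le> (\<Sum>f\<in>labelings h Hops. lab_prob h p f * 2^(h-j))"
    unfolding expected_level_nodes_def
  proof (intro sum_mono mult_left_mono lp0)
    fix f
    have "card (dag_level_nodes h f j) \<le> card {..<(2::nat)^(h-j)}"
      unfolding dag_level_nodes_def by (rule card_image_le) simp
    then show "real (card (dag_level_nodes h f j)) \<le> 2^(h-j)"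
      by (metis card_lessThan of_nat_le_iff of_nat_numeral of_nat_power)
  qed
  also have "\<dots> = 2^(h-j)" using tot by (simp add: sum_distrib_right[symmetric])
  finally show "expected_level_nodes h Hops p j \<le> 2^(h-j)" .
  have "expected_level_nodes h Hops p j \<le> (\<Sum>f\<in>labelings h Hops. lab_prob h p f * real (card Hops) ^ (2^j))"
    unfolding expected_level_nodes_def
  proof (intro sum_mono mult_left_mono lp0)
    fix f assume f: "f \<in> labelings h Hops"
    have "card (bF j f ` {..<2^(h-j)}) \<le> card (PiE {..<(2::nat)^j} (\<lambda>_. Hops))"
      using bF_in[OF jh f] fin by (intro card_mono finite_PiE) auto
    also have "\<dots> = card Hops ^ (2^j)" by (simp add: card_PiE)
    finally show "real (card (dag_level_nodes h f j)) \<le> real (card Hops) ^ (2^j)"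
      using card_dag[OF jh f] by (metis of_nat_le_iff of_nat_power)
  qed
  also have "\<dots> = real (card Hops) ^ (2^j)" using tot by (simp add: sum_distrib_right[symmetric])
  finally show "expected_level_nodes h Hops p j \<le> real (card Hops) ^ (2^j)" .
qed

theorem theorem1:
  fixes h :: nat and Hops :: "'a set" and p :: "'a \<Rightarrow> real" and kstar :: nat
  assumes "h \<ge> 2"
    and "finite Hops"
    and "\<And>x. x \<in> Hops \<Longrightarrow> p x > 0"
    and "(\<Sum>x\<in>Hops. p x) = 1"
    and "kstar \<in> {1..h}"
    and "\<And>j. j \<in> {1..h} \<Longrightarrow> beta h Hops p j \<le> beta h Hops p kstar"
  shows "2 * real (h - kstar) * (\<Sum>j=1..h. expected_level_nodes h Hops p j)
           \<le> 2 * real h * entropy_O Hops p * 2 ^ h + 6 * real h ^ 2"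
proof -
  note fin = assms(2) and pos = assms(3) and sum1 = assms(4)
  let ?H = "entropy_O Hops p"
  let ?B = "beta h Hops p kstar"
  have Hnn: "?H \<ge> 0"
    unfolding entropy_O_def
  proof (rule sum_nonneg)
    fix x assume x: "x \<in> Hops"
    have "p x \<le> 1" using p_le1[OF fin pos sum1 x] .
    then show "0 \<le> p x * log 2 (1 / p x)" using pos[OF x] by simp
  qed
  have Ej: "expected_level_nodes h Hops p j \<le> ?B" if j: "j \<in> {1..h}" for j
  proof -
    have jh: "j \<le> h" using j by simp
    note AB = levelAB[OF fin pos sum1 jh]
    have "expected_level_nodes h Hops p j \<le> beta h Hops p j"
    proof (cases "j = h")
      case True then show ?thesis using AB by (simp add: beta_def)
    next
      case False
      then have "j < h" using jh by simp
      then have "expected_level_nodes h Hops p j \<le> ?H / real (h - j) * 2 ^ h + 3"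
        using j by (intro levelC[OF fin pos sum1]) auto
      then show ?thesis using AB False by (simp add: beta_def)
    qed
    also have "\<dots> \<le> ?B" using assms(6) j .
    finally show ?thesis .
  qed
  have sumB: "(\<Sum>j=1..h. expected_level_nodes h Hops p j) \<le> real h * ?B"
  proof -
    have "(\<Sum>j=1..h. expected_level_nodes h Hops p j) \<le> (\<Sum>j=1..h. ?B)"
      using Ej by (intro sum_mono) auto
    then show ?thesis by simp
  qed
  show ?thesis
  proof (cases "kstar = h")
    case True
    have "0 \<le> 2 * real h * ?H * 2 ^ h + 6 * real h ^ 2" using Hnn by simp
    then show ?thesis using True by simp
  next
    case False
    then have kh: "kstar < h" using assms(5) by simp
    then have Bk: "?B \<le> ?H / real (h - kstar) * 2 ^ h + 3" by (simp add: beta_def)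
    have hk: "real (h - kstar) > 0" using kh by simp
    have "2 * real (h - kstar) * (\<Sum>j=1..h. expected_level_nodes h Hops p j)
        \<le> 2 * real (h - kstar) * (real h * ?B)"
      using sumB hk by (intro mult_left_mono) auto
    also have "\<dots> \<le> 2 * real (h - kstar) * (real h * (?H / real (h - kstar) * 2 ^ h + 3))"
      using Bk hk by (intro mult_left_mono) auto
    also have "\<dots> = 2 * real h * ?H * 2 ^ h + 6 * real h * real (h - kstar)"
      using hk by (simp add: field_simps)
    also have "\<dots> \<le> 2 * real h * ?H * 2 ^ h + 6 * real h ^ 2"
      using kh by (simp add: power2_eq_square)
    finally show ?thesis .
  qed
qed

end
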